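(* On a two-letter alphabet, there exists a $2$-regular word of length $n\ge 1$ if and only if $n=4k$ for some integer $k\ge 2$.
   Context: For a word $u=u_1\cdots u_m$ over an alphabet $\mathcal A$ with $b$ letters and an integer $r\ge -1$, $u$ is $r$-regular if for every $k=0,1,\dots,r$ the sum $\sum_{1\le t\le m,\ u_t=c} t^k$ is the same for all letters $c\in\mathcal A$ (a letter not occurring contributes $0$). Here $b=2$. *)

theory Defs
  imports Main
begin

definition pos_power_sum :: "'a list \<Rightarrow> 'a \<Rightarrow> nat \<Rightarrow> nat" where
  "pos_power_sum u c k = (\<Sum>t \<in> {t \<in> {1..length u}. u ! (t - 1) = c}. t ^ k)"

text \<open>u is r-regular over alphabet A (r may be -1, hence int).\<close>
definition regular_word :: "'a set \<Rightarrow> int \<Rightarrow> 'a list \<Rightarrow> bool" where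
  "regular_word A r u \<longleftrightarrow> set u \<subseteq> A \<and>
     (\<forall>k::nat. int k \<le> r \<longrightarrow> (\<forall>c\<in>A. \<forall>d\<in>A. pos_power_sum u c k = pos_power_sum u d k))"

end

theory Submission
  imports Defs
begin

definition ps :: "'a list \<Rightarrow> 'a \<Rightarrow> nat \<Rightarrow> nat" where
  "ps u c k = (\<Sum>t<length u. (if u ! t = c then (t+1)^k else 0))"

definition qs :: "'a list \<Rightarrow> 'a \<Rightarrow> nat \<Rightarrow> nat \<Rightarrow> nat" where
  "qs u c m k = (\<Sum>t<length u. (if u ! t = c then (t+1+m)^k else 0))"

lemma pps: "pos_power_sum u c k = ps u c k"
proof -
  have "pos_power_sum u c k = (\<Sum>t\<in>{1..length u}. (if u ! (t - 1) = c then t^k else 0))"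
    unfolding pos_power_sum_def by (subst sum.inter_filter) auto
  also have "\<dots> = (\<Sum>t\<in>Suc ` {..<length u}. (if u ! (t - 1) = c then t^k else 0))"
    by (simp add: image_Suc_lessThan)
  also have "\<dots> = ps u c k" unfolding ps_def
    by (subst sum.reindex) (auto cong: if_cong)
  finally show ?thesis .
qed

lemma ps_snoc: "ps (u@[x]) c k = ps u c k + (if x = c then (length u + 1)^k else 0)"
  unfolding ps_def by (simp add: nth_append)

lemma qs_snoc: "qs (u@[x]) c m k = qs u c m k + (if x = c then (length u + 1 + m)^k else 0)"
  unfolding qs_def by (simp add: nth_append)

lemma ps_append: "ps (u@v) c k = ps u c k + qs v c (length u) k"
proof (induction v rule: rev_induct)
  case Nil then show ?case by (simp add: qs_def)
next
  case (snoc x v)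
  then show ?case
    using ps_snoc[of "u@v" x c k] qs_snoc[of v x c "length u" k]
    by (simp add: algebra_simps)
qed

lemma qs0: "qs v c m 0 = ps v c 0"
  unfolding qs_def ps_def by (rule sum.cong) auto

lemma qs1: "qs v c m 1 = ps v c 1 + m * ps v c 0"
  unfolding qs_def ps_def
  by (simp add: sum_distrib_left sum.distrib[symmetric] if_distrib algebra_simps cong: if_cong)

lemma qs2: "qs v c m 2 = ps v c 2 + 2 * m * ps v c 1 + m^2 * ps v c 0"
proof -
  have "qs v c m 2 = (\<Sum>t<length v. (if v ! t = c then (t+1)^2 else 0) + 2*m*(if v ! t = c then (t+1) else 0)
        + m^2 * (if v ! t = c then 1 else 0))"
    unfolding qs_def by (rule sum.cong) (auto simp: power2_eq_square algebra_simps)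
  also have "\<dots> = ps v c 2 + 2 * m * ps v c 1 + m^2 * ps v c 0"
    unfolding ps_def by (simp add: sum.distrib sum_distrib_left cong: if_cong)
  finally show ?thesis .
qed

definition bal :: "'a \<Rightarrow> 'a \<Rightarrow> 'a list \<Rightarrow> bool" where
  "bal a b u \<longleftrightarrow> set u \<subseteq> {a,b} \<and> (\<forall>k\<le>2. ps u a k = ps u b k)"

lemma bal_append:
  assumes "bal a b u" "bal a b v" shows "bal a b (u@v)"
proof -
  have e: "ps v a k = ps v b k" if "k \<le> 2" for k using assms(2) that unfolding bal_def by auto
  have "qs v a m k = qs v b m k" if "k \<le> 2" for k m
  proof -
    have "k = 0 \<or> k = 1 \<or> k = 2" using that by auto
    then show ?thesis using e[of 0] e[of 1] e[of 2] qs0[of v _ m] qs1[of v _ m] qs2[of v _ m]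
      by (elim disjE) simp_all
  qed
  then show ?thesis using assms unfolding bal_def by (auto simp: ps_append)
qed

lemma sum_all:
  assumes "set u \<subseteq> {a,b}" "a \<noteq> b"
  shows "ps u a k + ps u b k = (\<Sum>t<length u. (t+1)^k)"
  unfolding ps_def sum.distrib[symmetric]
proof (rule sum.cong)
  fix t assume "t \<in> {..<length u}"
  then have "u ! t \<in> {a,b}" using assms(1) nth_mem by (metis lessThan_iff subsetD)
  then show "(if u ! t = a then (t + 1) ^ k else 0) + (if u ! t = b then (t + 1) ^ k else 0) = (t + 1) ^ k"
    using assms(2) by auto
qed simp

lemma s0: "(\<Sum>t<n. (t+1::nat)^0) = n" by simp
lemma s1: "2 * (\<Sum>t<n. (t+1::nat)^1) = n * (n+1)"
  by (induction n) (auto simp: algebra_simps)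
lemma s2: "6 * (\<Sum>t<n. (t+1::nat)^2) = n * (n+1) * (2*n+1)"
  by (induction n) (auto simp: algebra_simps power2_eq_square)

lemma qs_Nil: "qs [] c m k = 0" unfolding qs_def by simp

lemma qs_Cons: "qs (x#v) c m k = (if x = c then (m+1)^k else 0) + qs v c (m+1) k"
  unfolding qs_def length_Cons sum.lessThan_Suc_shift by (simp add: algebra_simps cong: if_cong)

lemma ps_qs: "ps v c k = qs v c 0 k"
  unfolding qs_def ps_def by (simp cong: if_cong)

lemma le2: "(k::nat) \<le> 2 \<longleftrightarrow> k = 0 \<or> k = 1 \<or> k = 2" by auto

lemma bal_w8: "a \<noteq> b \<Longrightarrow> bal a b [a,b,b,a,b,a,a,b]"
  unfolding bal_def le2 ps_qs by (auto simp: qs_Cons qs_Nil power2_eq_square)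

lemma bal_w12: "a \<noteq> b \<Longrightarrow> bal a b [b,a,b,a,a,a,b,b,b,a,b,a]"
  unfolding bal_def le2 ps_qs by (auto simp: qs_Cons qs_Nil power2_eq_square)

lemma constr: assumes "a \<noteq> b" shows "k \<ge> 2 \<Longrightarrow> \<exists>u. length u = 4*k \<and> bal a b u"
proof (induction k rule: nat_less_induct)
  case (1 k)
  show ?case
  proof (cases "k = 2 \<or> k = 3")
    case True
    then show ?thesis
    proof
      assume "k = 2"
      then show ?thesis using bal_w8[OF assms] by (intro exI[of _ "[a,b,b,a,b,a,a,b]"]) simp
    next
      assume "k = 3"
      then show ?thesis using bal_w12[OF assms] by (intro exI[of _ "[b,a,b,a,a,a,b,b,b,a,b,a]"]) simp
    qed
  next
    case False
    then have "k - 2 \<ge> 2" "k - 2 < k" using 1(2) by auto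
    then obtain u where "length u = 4*(k-2)" "bal a b u" using 1(1) by blast
    then have "length (u @ [a,b,b,a,b,a,a,b]) = 4*k" "bal a b (u @ [a,b,b,a,b,a,a,b])"
      using bal_append bal_w8[OF assms] \<open>k - 2 \<ge> 2\<close> by auto
    then show ?thesis by blast
  qed
qed

theorem mainTheorem10:
  fixes A :: "'a set" and n :: nat
  assumes "card A = 2" and "n \<ge> 1"
  shows "(\<exists>u. length u = n \<and> regular_word A 2 u) \<longleftrightarrow> (\<exists>k::nat. k \<ge> 2 \<and> n = 4 * k)"
proof -
  obtain a b where ab: "A = {a,b}" "a \<noteq> b" using assms(1) by (meson card_2_iff)
  have rb: "regular_word A 2 u \<longleftrightarrow> bal a b u" for u
    unfolding regular_word_def bal_def ab pps by auto
  show ?thesis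
  proof
    assume "\<exists>u. length u = n \<and> regular_word A 2 u"
    then obtain u where u: "length u = n" "bal a b u" using rb by blast
    have su: "set u \<subseteq> {a,b}" and eq: "\<And>k. k \<le> 2 \<Longrightarrow> ps u a k = ps u b k" using u(2) unfolding bal_def by auto
    have e0: "2 * ps u a 0 = n" using sum_all[OF su ab(2), of 0] eq[of 0] s0[of n] u(1) by simp
    have e1: "4 * ps u a 1 = n*(n+1)" using sum_all[OF su ab(2), of 1] eq[of 1] s1[of n] u(1) by simp
    obtain m where m: "n = 2*m" using e0 by metis
    have "m*(2*m+1) = 2 * ps u a 1" using e1 m by (simp add: algebra_simps)
    then have "even (m*(2*m+1))" by simp
    then have "even m" by simp
    then obtain k where k: "n = 4*k" using m by (auto elim!: evenE)
    have "k \<noteq> 0" using k assms(2) by auto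
    moreover have "k \<noteq> 1"
    proof
      assume "k = 1"
      then have "length u = 4" using k u(1) by simp
      then obtain x1 x2 x3 x4 where x: "u = [x1,x2,x3,x4]"
        by (auto simp: numeral_eq_Suc length_Suc_conv)
      have t1: "ps u a 1 = 5" using sum_all[OF su ab(2), of 1] eq[of 1] s1[of 4] \<open>length u = 4\<close> by simp
      have t2: "ps u a 2 = 15" using sum_all[OF su ab(2), of 2] eq[of 2] s2[of 4] \<open>length u = 4\<close> by simp
      show False using t1 t2 unfolding x ps_qs
        by (simp add: qs_Cons qs_Nil power2_eq_square split: if_splits)
    qed
    ultimately show "\<exists>k::nat. k \<ge> 2 \<and> n = 4 * k" using k by auto
  next
    assume "\<exists>k::nat. k \<ge> 2 \<and> n = 4 * k"
    then show "\<exists>u. length u = n \<and> regular_word A 2 u" using constr[OF ab(2)] rb by blast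
  qed
qed

end
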